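(* Let $G$ be a finite connected interval graph and $z$ any vertex of $G$. Then $\mathrm{imp}(G)\ge \mathrm{wt}(z)$.
   Context: A finite simple graph $G=(V,E)$ is an interval graph iff there is a representation $\alpha: v\mapsto I_v$ of the vertices by (closed, bounded) intervals of the real line such that $vw\in E$ iff $I_v\cap I_w\neq\emptyset$. For a representation $\alpha$ and a vertex $z$, the impropriety $\mathrm{imp}_\alpha(z)$ is the number of representing intervals $I_w$, $w\neq z$, with $I_w\subseteq I_z$. The impropriety $\mathrm{imp}(\alpha)$ is $\max_z \mathrm{imp}_\alpha(z)$, and $\mathrm{imp}(G)$ is the minimum of $\mathrm{imp}(\alpha)$ over all interval representations $\alpha$ of $G$. A local component at $z$ is a connected component of $G\setminus\{z\}$; it is exterior iff it contains a vertex not adjacent to $z$ (there are at most two exterior local components at any vertex of an interval graph). If $z$ has $n$ local components, the weight $\mathrm{wt}(z)$ is the sum of the $n-2$ smallest orders (numbers of vertices) among the non-exterior local components at $z$ (an empty sum, i.e. $0$, if $n\le 2$). *)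

theory Defs
  imports Complex_Main "HOL-Library.Multiset"
begin

definition simple_graph :: "'a set \<Rightarrow> ('a \<Rightarrow> 'a \<Rightarrow> bool) \<Rightarrow> bool" where
  "simple_graph V E \<longleftrightarrow> finite V \<and> (\<forall>x y. E x y \<longrightarrow> E y x) \<and> (\<forall>x. \<not> E x x)
      \<and> (\<forall>x y. E x y \<longrightarrow> x \<in> V \<and> y \<in> V)"

definition reach_in :: "('a \<Rightarrow> 'a \<Rightarrow> bool) \<Rightarrow> 'a set \<Rightarrow> 'a \<Rightarrow> 'a \<Rightarrow> bool" where
  "reach_in E S = (\<lambda>x y. x \<in> S \<and> y \<in> S \<and> E x y)\<^sup>*\<^sup>*"

definition connected_graph :: "'a set \<Rightarrow> ('a \<Rightarrow> 'a \<Rightarrow> bool) \<Rightarrow> bool" where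
  "connected_graph V E \<longleftrightarrow> V \<noteq> {} \<and> (\<forall>x\<in>V. \<forall>y\<in>V. reach_in E V x y)"

definition components_in :: "('a \<Rightarrow> 'a \<Rightarrow> bool) \<Rightarrow> 'a set \<Rightarrow> 'a set set" where
  "components_in E S = (\<lambda>x. {y \<in> S. reach_in E S x y}) ` S"

definition interval_rep :: "'a set \<Rightarrow> ('a \<Rightarrow> 'a \<Rightarrow> bool) \<Rightarrow> ('a \<Rightarrow> real set) \<Rightarrow> bool" where
  "interval_rep V E I \<longleftrightarrow>
     (\<forall>v\<in>V. \<exists>a b. a \<le> b \<and> I v = {a..b}) \<and>
     (\<forall>v\<in>V. \<forall>w\<in>V. v \<noteq> w \<longrightarrow> (E v w \<longleftrightarrow> I v \<inter> I w \<noteq> {}))"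

definition interval_graph :: "'a set \<Rightarrow> ('a \<Rightarrow> 'a \<Rightarrow> bool) \<Rightarrow> bool" where
  "interval_graph V E \<longleftrightarrow> simple_graph V E \<and> (\<exists>I. interval_rep V E I)"

definition imp_at :: "'a set \<Rightarrow> ('a \<Rightarrow> real set) \<Rightarrow> 'a \<Rightarrow> nat" where
  "imp_at V I z = card {w \<in> V - {z}. I w \<subseteq> I z}"

definition imp_rep :: "'a set \<Rightarrow> ('a \<Rightarrow> real set) \<Rightarrow> nat" where
  "imp_rep V I = Max (imp_at V I ` V)"

definition imp_graph :: "'a set \<Rightarrow> ('a \<Rightarrow> 'a \<Rightarrow> bool) \<Rightarrow> nat" where
  "imp_graph V E = (LEAST k. \<exists>I. interval_rep V E I \<and> imp_rep V I = k)"

definition local_comps :: "'a set \<Rightarrow> ('a \<Rightarrow> 'a \<Rightarrow> bool) \<Rightarrow> 'a \<Rightarrow> 'a set set" where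
  "local_comps V E z = components_in E (V - {z})"

definition exterior :: "('a \<Rightarrow> 'a \<Rightarrow> bool) \<Rightarrow> 'a \<Rightarrow> 'a set \<Rightarrow> bool" where
  "exterior E z C \<longleftrightarrow> (\<exists>v\<in>C. \<not> E z v)"

text \<open>Weight: sum of the (n-2) smallest orders among non-exterior local components,
  where n is the number of local components (nat subtraction: 0 if n \<le> 2).\<close>
definition wt :: "'a set \<Rightarrow> ('a \<Rightarrow> 'a \<Rightarrow> bool) \<Rightarrow> 'a \<Rightarrow> nat" where
  "wt V E z =
    (let LC = local_comps V E z;
         n = card LC;
         orders = sorted_list_of_multiset
                    (image_mset card (mset_set {C \<in> LC. \<not> exterior E z C}))
     in sum_list (take (n - 2) orders))"

end

theory Submission
  imports Defs
begin

lemma sorted_nth_le: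
  fixes xs :: "nat list"
  assumes "sorted xs" "size (filter_mset (\<lambda>x. x \<le> m) (mset xs)) > k"
  shows "k < length xs \<and> xs ! k \<le> m"
proof (rule ccontr)
  assume H: "\<not> (k < length xs \<and> xs ! k \<le> m)"
  have "length (filter (\<lambda>x. x \<le> m) xs) > k"
    using assms(2) by (metis mset_filter size_mset)
  moreover have "length (filter (\<lambda>x. x \<le> m) xs) \<le> k"
  proof (cases "k < length xs")
    case False
    then show ?thesis by (meson le_trans length_filter_le not_le_imp_less order_less_imp_le)
  next
    case True
    with H have gt: "xs ! k > m" by simp
    have "\<forall>y\<in>set (drop k xs). \<not> y \<le> m"
    proof
      fix y assume "y \<in> set (drop k xs)"
      then obtain j where "j < length (drop k xs)" "y = drop k xs ! j" by (metis in_set_conv_nth)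
      then have "y = xs ! (k + j)" "k + j < length xs" by auto
      then have "xs ! k \<le> y" using assms(1) by (simp add: sorted_nth_mono)
      then show "\<not> y \<le> m" using gt by simp
    qed
    then have "filter (\<lambda>x. x \<le> m) (drop k xs) = []" by (simp add: filter_empty_conv)
    then have "filter (\<lambda>x. x \<le> m) xs = filter (\<lambda>x. x \<le> m) (take k xs)"
      by (metis append_Nil2 append_take_drop_id filter_append)
    then show ?thesis by (metis length_filter_le length_take min.bounded_iff nle_le)
  qed
  ultimately show False by simp
qed

lemma take_sum_le:
  fixes M :: "nat multiset"
  shows "N \<subseteq># M \<Longrightarrow> k \<le> size N \<Longrightarrow> sum_list (take k (sorted_list_of_multiset M)) \<le> sum_mset N"
proof (induction k arbitrary: N)
  case 0 then show ?case by simp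
next
  case (Suc k)
  define xs where "xs = sorted_list_of_multiset M"
  have "N \<noteq> {#}" using Suc.prems by auto
  define m where "m = Max (set_mset N)"
  have mN: "m \<in># N" unfolding m_def using \<open>N \<noteq> {#}\<close> by (simp add: Max_in)
  define N' where "N' = N - {#m#}"
  have NN: "N = add_mset m N'" using mN N'_def by simp
  have "N' \<subseteq># M" using Suc.prems(1) N'_def by (metis diff_subset_eq_self subset_mset.order_trans)
  moreover have "k \<le> size N'" using Suc.prems(2) NN by simp
  ultimately have IH: "sum_list (take k xs) \<le> sum_mset N'" using Suc.IH xs_def by blast
  have "filter_mset (\<lambda>x. x \<le> m) N = N"
    by (simp add: m_def filter_mset_eq_conv)
  moreover have "filter_mset (\<lambda>x. x \<le> m) N \<subseteq># filter_mset (\<lambda>x. x \<le> m) M"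
    using Suc.prems(1) by (simp add: multiset_filter_mono)
  ultimately have "size N \<le> size (filter_mset (\<lambda>x. x \<le> m) (mset xs))"
    unfolding xs_def by (metis mset_sorted_list_of_multiset size_mset_mono)
  then have "size (filter_mset (\<lambda>x. x \<le> m) (mset xs)) > k" using Suc.prems(2) by simp
  then have kk: "k < length xs \<and> xs ! k \<le> m" using sorted_nth_le xs_def by auto
  then have "take (Suc k) xs = take k xs @ [xs ! k]" by (simp add: take_Suc_conv_app_nth)
  then have "sum_list (take (Suc k) xs) = sum_list (take k xs) + xs ! k" by simp
  also have "\<dots> \<le> sum_mset N' + m" using IH kk by simp
  also have "\<dots> = sum_mset N" using NN by simp
  finally show ?case unfolding xs_def .
qed

lemma mset_set_mono: "finite B \<Longrightarrow> A \<subseteq> B \<Longrightarrow> mset_set A \<subseteq># mset_set B"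
  by (metis Diff_disjoint Diff_partition finite_Diff finite_subset mset_set_Union subset_mset.le_add_same_cancel1 subset_mset.zero_le)


lemma reach_trans: "reach_in E S x y \<Longrightarrow> reach_in E S y w \<Longrightarrow> reach_in E S x w"
  unfolding reach_in_def by (rule rtranclp_trans)

lemma reach_step: "E x y \<Longrightarrow> x \<in> S \<Longrightarrow> y \<in> S \<Longrightarrow> reach_in E S x y"
  unfolding reach_in_def by (simp add: r_into_rtranclp)

lemma reach_sym:
  assumes sym: "\<forall>x y. E x y \<longrightarrow> E y x" and r: "reach_in E S x y"
  shows "reach_in E S y x"
  using r unfolding reach_in_def
proof (induction rule: rtranclp_induct)
  case base then show ?case by simp
next
  case (step y w)
  then have "(\<lambda>x y. x \<in> S \<and> y \<in> S \<and> E x y) w y" using sym by blast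
  then show ?case using step(3) by (rule converse_rtranclp_into_rtranclp)
qed

lemma comp_eq:
  assumes sym: "\<forall>x y. E x y \<longrightarrow> E y x" and C: "C \<in> components_in E S" and x: "x \<in> C"
  shows "C = {y\<in>S. reach_in E S x y}"
proof -
  obtain x0 where x0: "x0 \<in> S" "C = {y\<in>S. reach_in E S x0 y}"
    using C unfolding components_in_def by blast
  have xx: "x \<in> S \<and> reach_in E S x0 x" using x unfolding x0(2) by simp
  then have "x \<in> S" "reach_in E S x0 x" by auto
  have "reach_in E S x x0" by (rule reach_sym[OF sym \<open>reach_in E S x0 x\<close>])
  have "\<And>y. reach_in E S x0 y = reach_in E S x y"
    using \<open>reach_in E S x x0\<close> \<open>reach_in E S x0 x\<close> reach_trans by metis
  then show ?thesis unfolding x0(2) by simp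
qed

lemma comp_sub: "C \<in> components_in E S \<Longrightarrow> C \<subseteq> S"
  unfolding components_in_def by auto

lemma comp_disj:
  assumes sym: "\<forall>x y. E x y \<longrightarrow> E y x" and "C \<in> components_in E S" "D \<in> components_in E S"
    "x \<in> C" "x \<in> D"
  shows "C = D"
  using comp_eq[OF sym assms(2,4)] comp_eq[OF sym assms(3,5)] by simp

lemma comp_closed:
  assumes sym: "\<forall>x y. E x y \<longrightarrow> E y x" and C: "C \<in> components_in E S"
    and "u \<in> C" "v \<in> S" "E u v"
  shows "v \<in> C"
proof -
  have "u \<in> S" using comp_sub C assms(3) by blast
  then have "reach_in E S u v" using reach_step assms by metis
  then show ?thesis using comp_eq[OF sym C assms(3)] assms(4) by blast
qed

lemma crossing:
  assumes "R\<^sup>*\<^sup>* u x" "x \<in> C" "u \<notin> C"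
  shows "\<exists>y c. y \<notin> C \<and> c \<in> C \<and> R y c"
  using assms
proof (induction rule: rtranclp_induct)
  case base then show ?case by simp
next
  case (step y w)
  show ?case
  proof (cases "y \<in> C")
    case True then show ?thesis using step.IH step.prems(2) by blast
  next
    case False then show ?thesis using step.hyps(2) step.prems(1) by blast
  qed
qed

lemma path_inv:
  assumes "reach_in E S x y" "P x"
    and "\<And>u v. u \<in> S \<Longrightarrow> v \<in> S \<Longrightarrow> E u v \<Longrightarrow> P u \<Longrightarrow> P v"
  shows "P y"
  using assms(1,2) unfolding reach_in_def
proof (induction rule: rtranclp_induct)
  case base then show ?case by simp
next
  case (step y w) then show ?case using assms(3) by blast
qed

lemma geom:
  fixes a b c d p :: real
  assumes "J \<subseteq> {a..b}" "p \<in> J" "p \<in> {c..d}" "a \<notin> {c..d}" "b \<notin> {c..d}"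
  shows "{c..d} \<subseteq> {a..b}"
proof -
  have "a \<le> p" "p \<le> b" using assms(1,2) by auto
  moreover have "c \<le> p" "p \<le> d" using assms(3) by auto
  ultimately have "a < c" "d < b" using assms(4,5) by (auto simp: not_le)
  then show ?thesis by auto
qed


theorem theorem2p2:
  fixes V :: "'a set" and E :: "'a \<Rightarrow> 'a \<Rightarrow> bool" and z :: 'a
  assumes "interval_graph V E"
    and "connected_graph V E"
    and "z \<in> V"
  shows "imp_graph V E \<ge> wt V E z"
proof -
  have sg: "simple_graph V E" and ex: "\<exists>I. interval_rep V E I"
    using assms(1) unfolding interval_graph_def by auto
  have finV: "finite V" and sym: "\<forall>x y. E x y \<longrightarrow> E y x" and irr: "\<forall>x. \<not> E x x"
    using sg unfolding simple_graph_def by auto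
  have key: "wt V E z \<le> imp_rep V I" if rep: "interval_rep V E I" for I
  proof -
    have ivl: "\<And>v. v \<in> V \<Longrightarrow> \<exists>c d. c \<le> d \<and> I v = {c..d}"
      using rep unfolding interval_rep_def by blast
    have adj: "\<And>v w. v \<in> V \<Longrightarrow> w \<in> V \<Longrightarrow> v \<noteq> w \<Longrightarrow> E v w \<longleftrightarrow> I v \<inter> I w \<noteq> {}"
      using rep unfolding interval_rep_def by blast
    obtain a b where ab: "a \<le> b" "I z = {a..b}" using ivl[OF assms(3)] by blast
    define S where "S = V - {z}"
    define LC where "LC = local_comps V E z"
    have LC': "LC = components_in E S" by (simp add: LC_def S_def local_comps_def)
    have finLC: "finite LC" using finV unfolding LC' components_in_def S_def by simp
    have csub: "\<And>C. C \<in> LC \<Longrightarrow> C \<subseteq> S" using comp_sub LC' by blast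
    have compfin: "\<And>C. C \<in> LC \<Longrightarrow> finite C"
      using csub finV S_def by (metis finite_Diff finite_subset)
    define In where "In = {C\<in>LC. \<forall>v\<in>C. I v \<subseteq> I z}"
    define A where "A = {C\<in>LC. \<exists>w\<in>C. a \<in> I w}"
    define B where "B = {C\<in>LC. \<exists>w\<in>C. b \<in> I w}"
    have touch: "\<exists>c\<in>C. E z c" if C: "C \<in> LC" for C
    proof -
      obtain x where x: "x \<in> C"
        using C unfolding LC' components_in_def reach_in_def by blast
      have "x \<in> V" using csub C x S_def by blast
      then have "reach_in E V z x" using assms(2) assms(3) unfolding connected_graph_def by blast
      moreover have "z \<notin> C" using csub C S_def by blast
      ultimately obtain y c where yc: "y \<notin> C" "c \<in> C" "y\<in>V \<and> c\<in>V \<and> E y c"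
        using crossing[of "\<lambda>x y. x\<in>V \<and> y\<in>V \<and> E x y" z x C] x unfolding reach_in_def by blast
      have "y = z"
      proof (rule ccontr)
        assume "y \<noteq> z" then have "y \<in> S" using yc S_def by blast
        moreover have "E c y" using yc sym by blast
        ultimately have "y \<in> C" using comp_closed[OF sym, of C S c y] C LC' yc(2) by blast
        then show False using yc(1) by blast
      qed
      then show ?thesis using yc by blast
    qed
    have stepI: "I v \<subseteq> {a..b}" if h: "u \<in> V" "v \<in> V" "u \<noteq> v" "E u v" "I u \<subseteq> {a..b}"
      "a \<notin> I v" "b \<notin> I v" for u v
    proof -
      obtain c d where cd: "I v = {c..d}" using ivl[OF h(2)] by blast
      have "I u \<inter> I v \<noteq> {}" using adj[OF h(1-3)] h(4) by blast
      then obtain p where p: "p \<in> I u" "p \<in> I v" by blast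
      show ?thesis using geom[OF h(5) p(1), of c d] p(2) h(6,7) cd by simp
    qed
    have inside: "C \<in> In" if C: "C \<in> LC" "C \<notin> A" "C \<notin> B" for C
    proof -
      have noab: "\<And>w. w \<in> C \<Longrightarrow> a \<notin> I w \<and> b \<notin> I w" using C A_def B_def by blast
      have sub: "\<And>w. w \<in> C \<Longrightarrow> w \<in> V \<and> w \<noteq> z" using csub C(1) S_def by blast
      obtain c0 where c0: "c0 \<in> C" "E z c0" using touch C(1) by blast
      have c0z: "c0 \<noteq> z" using c0(2) irr by blast
      have base: "I c0 \<subseteq> {a..b}"
        using stepI[of z c0] assms(3) sub[OF c0(1)] c0 c0z noab[OF c0(1)] ab(2) by auto
      have Ceq: "C = {y\<in>S. reach_in E S c0 y}" using comp_eq[OF sym _ c0(1)] C(1) LC' by blast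
      have all: "\<forall>v\<in>C. I v \<subseteq> I z"
      proof
        fix v assume v: "v \<in> C"
        then have r: "reach_in E S c0 v" using Ceq by blast
        have "v \<in> C \<and> I v \<subseteq> {a..b}"
        proof (rule path_inv[OF r, where P = "\<lambda>w. w \<in> C \<and> I w \<subseteq> {a..b}"])
          show "c0 \<in> C \<and> I c0 \<subseteq> {a..b}" using c0(1) base by blast
        next
          fix u w assume uw: "u \<in> S" "w \<in> S" "E u w" "u \<in> C \<and> I u \<subseteq> {a..b}"
          have wC: "w \<in> C" using comp_closed[OF sym, of C S u w] C(1) LC' uw by blast
          have "u \<noteq> w" using uw(3) irr by blast
          then have "I w \<subseteq> {a..b}"
            using stepI[of u w] uw sub wC noab[OF wC] by blast
          then show "w \<in> C \<and> I w \<subseteq> {a..b}" using wC by blast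
        qed
        then show "I v \<subseteq> I z" using ab(2) by simp
      qed
      show ?thesis using all C(1) In_def by blast
    qed
    have oneA: "card A \<le> 1" and oneB: "card B \<le> 1"
    proof -
      have uniq: "C1 = C2" if h: "C1 \<in> LC" "C2 \<in> LC" "w1 \<in> C1" "w2 \<in> C2" "p \<in> I w1" "p \<in> I w2"
        for C1 C2 w1 w2 p
      proof (cases "w1 = w2")
        case True then show ?thesis using comp_disj[OF sym, of C1 S C2 w1] h LC' by blast
      next
        case False
        have "w1 \<in> S" "w2 \<in> S" using csub h by blast+
        then have "E w1 w2" using adj[of w1 w2] False h(5,6) S_def by blast
        then have "w2 \<in> C1" using comp_closed[OF sym, of C1 S w1 w2] h(1,3) LC' \<open>w2 \<in> S\<close> by blast
        then show ?thesis using comp_disj[OF sym, of C1 S C2 w2] h LC' by blast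
      qed
      have "finite A" "finite B" using finLC A_def B_def by auto
      have "\<forall>x\<in>A. \<forall>y\<in>A. x = y"
      proof (intro ballI)
        fix x y assume "x \<in> A" "y \<in> A"
        then obtain w1 w2 where "x \<in> LC" "y \<in> LC" "w1 \<in> x" "w2 \<in> y" "a \<in> I w1" "a \<in> I w2"
          unfolding A_def by blast
        then show "x = y" by (rule uniq)
      qed
      then show "card A \<le> 1" using card_le_Suc0_iff_eq[OF \<open>finite A\<close>] by simp
      have "\<forall>x\<in>B. \<forall>y\<in>B. x = y"
      proof (intro ballI)
        fix x y assume "x \<in> B" "y \<in> B"
        then obtain w1 w2 where "x \<in> LC" "y \<in> LC" "w1 \<in> x" "w2 \<in> y" "b \<in> I w1" "b \<in> I w2"
          unfolding B_def by blast
        then show "x = y" by (rule uniq)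
      qed
      then show "card B \<le> 1" using card_le_Suc0_iff_eq[OF \<open>finite B\<close>] by simp
    qed
    have finIn: "finite In" using finLC In_def by auto
    have "LC \<subseteq> In \<union> A \<union> B" using inside by blast
    then have "card LC \<le> card (In \<union> A \<union> B)" using finLC A_def B_def In_def by (intro card_mono) auto
    also have "\<dots> \<le> card In + card A + card B" by (meson card_Un_le add_le_mono1 order_trans)
    finally have cardLC: "card LC - 2 \<le> card In" using oneA oneB by linarith
    define NE where "NE = {C \<in> LC. \<not> exterior E z C}"
    have InNE: "In \<subseteq> NE"
    proof
      fix C assume C: "C \<in> In"
      have "\<forall>v\<in>C. E z v"
      proof
        fix v assume v: "v \<in> C"
        have vV: "v \<in> V" "v \<noteq> z" using csub C v In_def S_def by auto
        have "I v \<subseteq> I z" using C v In_def by blast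
        moreover have "I v \<noteq> {}" using ivl[OF vV(1)] by auto
        ultimately have "I z \<inter> I v \<noteq> {}" by blast
        then show "E z v" using adj[OF assms(3) vV(1)] vV(2) by auto
      qed
      then show "C \<in> NE" using C unfolding In_def NE_def exterior_def by blast
    qed
    have finNE: "finite NE" using finLC NE_def by auto
    have "card (\<Union>In) = sum card In"
    proof (rule card_Union_disjoint)
      show "\<And>C. C \<in> In \<Longrightarrow> finite C" using compfin In_def by auto
      show "pairwise disjnt In"
        unfolding pairwise_def disjnt_def
      proof (intro ballI impI)
        fix C D assume "C \<in> In" "D \<in> In" "C \<noteq> D"
        then show "C \<inter> D = {}" using comp_disj[OF sym, of C S D] LC' In_def by blast
      qed
    qed
    moreover have "\<Union>In \<subseteq> {w \<in> V - {z}. I w \<subseteq> I z}" using csub S_def In_def by blast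
    ultimately have "sum card In \<le> imp_at V I z" unfolding imp_at_def
      by (metis (no_types, lifting) card_mono finV finite_Diff finite_subset mem_Collect_eq subsetI)
    also have "\<dots> \<le> imp_rep V I" unfolding imp_rep_def using finV assms(3) by simp
    finally have sumle: "sum card In \<le> imp_rep V I" .
    have "wt V E z = sum_list (take (card LC - 2)
            (sorted_list_of_multiset (image_mset card (mset_set NE))))"
      unfolding wt_def Let_def LC_def NE_def by simp
    also have "\<dots> \<le> sum_mset (image_mset card (mset_set In))"
    proof (rule take_sum_le)
      show "image_mset card (mset_set In) \<subseteq># image_mset card (mset_set NE)"
        by (rule image_mset_subseteq_mono, rule mset_set_mono[OF finNE InNE])
      show "card LC - 2 \<le> size (image_mset card (mset_set In))" using cardLC finIn by simp
    qed
    also have "\<dots> = sum card In" by (simp add: sum_unfold_sum_mset)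
    finally show ?thesis using sumle by simp
  qed
  have "\<exists>I. interval_rep V E I \<and> imp_rep V I = imp_graph V E"
    unfolding imp_graph_def
  proof (rule LeastI_ex)
    obtain I where "interval_rep V E I" using ex by blast
    then show "\<exists>k I. interval_rep V E I \<and> imp_rep V I = k" by blast
  qed
  then obtain I where "interval_rep V E I" "imp_rep V I = imp_graph V E" by blast
  then show ?thesis using key[of I] by simp
qed

end
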